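(* Let $m\in\mathbb{N}$ and let $A$ be a finite (nonempty) sequence of positive integers. If $A$ is an $m$-palindrome, then the concatenation $A^2=AA$ is an $m$-palindrome.
   Context: For a finite sequence $(c_0,\dots,c_k)$ of positive integers, $[c_0,\dots,c_k]$ denotes the value of the finite continued fraction $c_0+\cfrac{1}{c_1+\cfrac{1}{\ddots+\cfrac{1}{c_k}}}$. A finite sequence $(c_0,\dots,c_k)$ of positive integers is an $m$-palindrome ($m\in\mathbb{N}$) if $[c_0,\dots,c_k]=m\,[c_k,\dots,c_0]$. *)

theory Defs
  imports Complex_Main
begin

text \<open>Value of the finite continued fraction [c0, c1, ..., ck]
  = c0 + 1/(c1 + 1/(... + 1/ck)). The empty list is not a valid continued
  fraction; it is assigned the value 0 only for totality.\<close>
fun cf :: "nat list \<Rightarrow> real" where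
  "cf [] = 0"
| "cf [c] = real c"
| "cf (c # d # cs) = real c + 1 / cf (d # cs)"

definition m_palindrome :: "nat \<Rightarrow> nat list \<Rightarrow> bool" where
  "m_palindrome m cs \<longleftrightarrow> cs \<noteq> [] \<and> (\<forall>c\<in>set cs. 0 < c) \<and>
     cf cs = real m * cf (rev cs)"

end

theory Submission
  imports Defs
begin

type_synonym m4 = "nat \<times> nat \<times> nat \<times> nat"

fun mmul :: "m4 \<Rightarrow> m4 \<Rightarrow> m4" where
  "mmul (a,b,c,d) (e,f,g,h) = (a*e+b*g, a*f+b*h, c*e+d*g, c*f+d*h)"

fun tr :: "m4 \<Rightarrow> m4" where "tr (a,b,c,d) = (a,c,b,d)"

fun mat :: "nat list \<Rightarrow> m4" where
  "mat [] = (1,0,0,1)"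
| "mat (c#cs) = mmul (c,1,1,0) (mat cs)"

lemma mmul_assoc: "mmul (mmul x y) z = mmul x (mmul y z)"
  by (cases x; cases y; cases z) (simp add: algebra_simps)

lemma mmul_idl: "mmul (Suc 0,0,0,Suc 0) x = x"
  by (cases x) simp

lemma mat_app: "mat (xs @ ys) = mmul (mat xs) (mat ys)"
  by (induction xs) (auto simp: mmul_assoc mmul_idl)

lemma mmul_id: "mmul x (1,0,0,1) = x"
  by (cases x) simp

lemma tr_mul: "tr (mmul x y) = mmul (tr y) (tr x)"
  by (cases x; cases y) (simp add: algebra_simps)

lemma mat_rev: "mat (rev xs) = tr (mat xs)"
  by (induction xs) (auto simp: mat_app tr_mul mmul_id)

lemma mat_cf:
  assumes "cs \<noteq> []" "\<forall>c\<in>set cs. 0 < c" "mat cs = (a,b,c,d)"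
  shows "a > 0 \<and> b > 0 \<and> c > 0 \<and> cf cs = real a / real c"
  using assms
proof (induction cs arbitrary: a b c d rule: cf.induct)
  case 1 then show ?case by simp
next
  case (2 x) then show ?case by auto
next
  case (3 x y cs)
  obtain a' b' c' d' where m: "mat (y#cs) = (a',b',c',d')" by (cases "mat (y#cs)") auto
  from 3 m have IH: "a' > 0 \<and> b' > 0 \<and> c' > 0 \<and> cf (y#cs) = real a' / real c'" by auto
  from 3(4) m have e: "a = x*a'+c'" "b = x*b'+d'" "c = a'" by auto
  from 3(3) have "x > 0" by auto
  with IH e show ?case by (auto simp: field_simps)
qed

lemma mat_cf_rev:
  assumes "cs \<noteq> []" "\<forall>c\<in>set cs. 0 < c" "mat cs = (a,b,c,d)"
  shows "a > 0 \<and> b > 0 \<and> c > 0 \<and> cf cs = real a / real c \<and> cf (rev cs) = real a / real b"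
proof -
  have r: "mat (rev cs) = (a,c,b,d)" using assms(3) by (simp add: mat_rev)
  show ?thesis using mat_cf[OF assms] mat_cf[of "rev cs", OF _ _ r] assms(1,2) by auto
qed

theorem lemma3p6:
  fixes m :: nat and A :: "nat list"
  assumes "A \<noteq> []" and "\<forall>c\<in>set A. 0 < c"
    and "m_palindrome m A"
  shows "m_palindrome m (A @ A)"
proof -
  obtain p p' q q' where M: "mat A = (p,p',q,q')" by (cases "mat A") auto
  note h = mat_cf_rev[OF assms(1,2) M]
  have "real p / real q = real m * (real p / real p')"
    using assms(3) h unfolding m_palindrome_def by simp
  hence "real p' = real m * real q" using h by (auto simp: field_simps)
  hence pq: "p' = m * q" by (metis of_nat_eq_iff of_nat_mult)
  have MM: "mat (A @ A) = (p*p+p'*q, p*p'+p'*q', q*p+q'*q, q*p'+q'*q')"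
    by (simp add: mat_app M)
  note h2 = mat_cf_rev[OF _ _ MM] 
  have ne: "A @ A \<noteq> []" "\<forall>c\<in>set (A@A). 0 < c" using assms by auto
  have "p*p'+p'*q' = m * (q*p+q'*q)" using pq by (simp add: algebra_simps)
  hence eq: "real (p*p'+p'*q') = real m * real (q*p+q'*q)" by (metis of_nat_mult)
  have pos: "real (q*p+q'*q) > 0" "real (p*p'+p'*q') > 0" using h by (simp_all add: add_pos_nonneg)
  have mpos: "m > 0" using pq h by (cases m) auto
  define N where "N = real (p*p+p'*q)"
  have c1: "cf (A@A) = N / real (q*p+q'*q)" using h2[OF ne] unfolding N_def by simp
  have c2: "cf (rev (A@A)) = N / real (p*p'+p'*q')" using h2[OF ne] unfolding N_def by simp
  have "cf (A@A) = real m * cf (rev (A@A))"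
    unfolding c1 c2 eq using pos(1) mpos by (simp add: eq)
  thus ?thesis using ne unfolding m_palindrome_def by auto
qed

end
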